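(* Let $r\ge1$ and $n\ge2r$. For every integer $i\ge0$, the restricted Casimir polynomial $C_{2i+1}(x_1,\dots,x_r)$ lies in the subalgebra of $\mathbb{C}[x_1,\dots,x_r]$ generated by the constants and the polynomials $C_{2k}(x_1,\dots,x_r)$ for $k\ge1$.
   Context: Casimir eigenvalues. For $\nu=(\nu_1,\dots,\nu_n)$ and an integer $p\ge 0$, let $$c_p(\nu)=\sum_{i=1}^n(\nu_i+n-i)^p\prod_{j\ne i}\Bigl(1-\frac{1}{\nu_i-\nu_j+j-i}\Bigr).$$ This rational expression is in fact a polynomial in $\nu$; it is the eigenvalue of the higher Casimir operator $\mathrm{tr}(\mathbf E^p)$ of $\mathfrak{gl}_n$ on the irreducible module of highest weight $\nu$. The restricted Casimir polynomial is $$C_p(x_1,\dots,x_r)=c_p(x_1,\dots,x_r,\underbrace{0,\dots,0}_{n-2r},-x_r,\dots,-x_1).$$ *)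

theory Defs
  imports Complex_Main
begin

text \<open>Casimir eigenvalue c_p(nu) for gl_n; nu is indexed by 1..n.
  This is the rational expression from the paper; it agrees with the
  polynomial c_p at every nu where all denominators are nonzero.\<close>
definition casimir_ev :: "nat \<Rightarrow> nat \<Rightarrow> (nat \<Rightarrow> complex) \<Rightarrow> complex" where
  "casimir_ev n p nu =
     (\<Sum>i\<in>{1..n}. (nu i + of_nat n - of_nat i) ^ p *
        (\<Prod>j\<in>{1..n} - {i}. (1 - 1 / (nu i - nu j + of_nat j - of_nat i))))"

definition restr_weight :: "nat \<Rightarrow> nat \<Rightarrow> (nat \<Rightarrow> complex) \<Rightarrow> nat \<Rightarrow> complex" where
  "restr_weight r n x i =
     (if i \<le> r then x i else if i \<le> n - r then 0 else - x (n + 1 - i))"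

definition restr_casimir :: "nat \<Rightarrow> nat \<Rightarrow> nat \<Rightarrow> (nat \<Rightarrow> complex) \<Rightarrow> complex" where
  "restr_casimir r n p x = casimir_ev n p (restr_weight r n x)"

text \<open>Points x where no denominator in the defining expression vanishes
  (a nonempty Zariski-open, hence dense, subset of C^r).\<close>
definition casimir_generic :: "nat \<Rightarrow> nat \<Rightarrow> (nat \<Rightarrow> complex) \<Rightarrow> bool" where
  "casimir_generic r n x \<longleftrightarrow>
     (\<forall>i\<in>{1..n}. \<forall>j\<in>{1..n}. i \<noteq> j \<longrightarrow>
        restr_weight r n x i - restr_weight r n x j + of_nat j - of_nat i \<noteq> 0)"

inductive_set even_casimir_subalg :: "nat \<Rightarrow> nat \<Rightarrow> ((nat \<Rightarrow> complex) \<Rightarrow> complex) set"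
  for r n :: nat where
  const: "(\<lambda>_. c) \<in> even_casimir_subalg r n"
| gen: "k \<ge> 1 \<Longrightarrow> restr_casimir r n (2 * k) \<in> even_casimir_subalg r n"
| add: "f \<in> even_casimir_subalg r n \<Longrightarrow> g \<in> even_casimir_subalg r n \<Longrightarrow>
          (\<lambda>x. f x + g x) \<in> even_casimir_subalg r n"
| mult: "f \<in> even_casimir_subalg r n \<Longrightarrow> g \<in> even_casimir_subalg r n \<Longrightarrow>
          (\<lambda>x. f x * g x) \<in> even_casimir_subalg r n"

end

theory Submission
  imports Defs "HOL-Computational_Algebra.Polynomial_FPS"
begin

unbundle fps_syntax


lemma pf_u:
  fixes e :: "nat \<Rightarrow> complex" and I :: "nat set"
  assumes fin: "finite I" and inj: "inj_on e I"
  shows "(\<Prod>j\<in>I. (u - e j - 1)) = (\<Prod>j\<in>I. (u - e j)) -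
     (\<Sum>i\<in>I. (\<Prod>j\<in>I-{i}. (1 - 1/(e i - e j))) * (\<Prod>j\<in>I-{i}. (u - e j)))"
proof (cases "I = {}")
  case True then show ?thesis by simp
next
  case False
  define n where "n = card I"
  have n1: "n \<ge> 1" using False fin n_def by (simp add: Suc_le_eq card_gt_0_iff)
  define a where "a i = (\<Prod>j\<in>I-{i}. (1 - 1/(e i - e j)))" for i
  define p1 where "p1 = (\<Prod>j\<in>I. [:-e j - 1, 1:])"
  define p0 where "p0 = (\<Prod>j\<in>I. [:-e j, 1:])"
  define s where "s = (\<Sum>i\<in>I. smult (a i) (\<Prod>j\<in>I-{i}. [:-e j, 1:]))"
  define p where "p = p1 - p0 + s"
  have polyp: "poly p x = (\<Prod>j\<in>I. (x - e j - 1)) - (\<Prod>j\<in>I. (x - e j)) +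
     (\<Sum>i\<in>I. a i * (\<Prod>j\<in>I-{i}. (x - e j)))" for x
    unfolding p_def p1_def p0_def s_def
    by (simp add: poly_prod poly_sum) (rule prod.cong, simp_all)
  have dp1: "degree p1 = n" unfolding p1_def n_def
    by (subst degree_prod_sum_eq) auto
  have dp0: "degree p0 = n" unfolding p0_def n_def
    by (subst degree_prod_sum_eq) auto
  have "lead_coeff p1 = 1" unfolding p1_def by (simp add: lead_coeff_prod)
  then have lp1: "coeff p1 n = 1" using dp1 by simp
  have "lead_coeff p0 = 1" unfolding p0_def by (simp add: lead_coeff_prod)
  then have lp0: "coeff p0 n = 1" using dp0 by simp
  have ds: "degree s \<le> n - 1"
    unfolding s_def
  proof (rule degree_sum_le)
    fix i assume i: "i \<in> I"
    have "degree (\<Prod>j\<in>I-{i}. [:-e j, 1:]) = card (I - {i})"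
      by (subst degree_prod_sum_eq) auto
    also have "\<dots> = n - 1" using i fin n_def by simp
    finally show "degree (smult (a i) (\<Prod>j\<in>I-{i}. [:-e j, 1:])) \<le> n - 1"
      by (metis degree_smult_le dual_order.trans order_refl)
  qed (use fin in auto)
  have dp: "degree p \<le> n - 1"
  proof (rule degree_le, intro allI impI)
    fix k assume k: "n - 1 < k"
    show "coeff p k = 0"
    proof (cases "k = n")
      case True
      then have "coeff s k = 0" using ds n1 by (intro coeff_eq_0) auto
      then show ?thesis using True lp1 lp0 by (simp add: p_def)
    next
      case False
      then have "k > n" using k by auto
      then have "coeff s k = 0" "coeff p1 k = 0" "coeff p0 k = 0"
        using ds dp1 dp0 by (auto intro!: coeff_eq_0)
      then show ?thesis by (simp add: p_def)
    qed
  qed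
  have roots: "poly p (e i) = 0" if i: "i \<in> I" for i
  proof -
    have A: "(\<Prod>j\<in>I. (e i - e j - 1)) = - (\<Prod>j\<in>I-{i}. (e i - e j - 1))"
      using i fin by (simp add: prod.remove)
    have B: "(\<Prod>j\<in>I. (e i - e j)) = 0" using i fin by (auto intro: prod_zero)
    have C: "(\<Sum>i'\<in>I. a i' * (\<Prod>j\<in>I-{i'}. (e i - e j))) = a i * (\<Prod>j\<in>I-{i}. (e i - e j))"
    proof -
      have "(\<Sum>i'\<in>I. a i' * (\<Prod>j\<in>I-{i'}. (e i - e j))) =
          a i * (\<Prod>j\<in>I-{i}. (e i - e j)) + (\<Sum>i'\<in>I-{i}. a i' * (\<Prod>j\<in>I-{i'}. (e i - e j)))"
        using i fin by (simp add: sum.remove)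
      also have "(\<Sum>i'\<in>I-{i}. a i' * (\<Prod>j\<in>I-{i'}. (e i - e j))) = 0"
        using i fin by (intro sum.neutral) (auto intro!: prod_zero)
      finally show ?thesis by simp
    qed
    have D: "a i * (\<Prod>j\<in>I-{i}. (e i - e j)) = (\<Prod>j\<in>I-{i}. (e i - e j - 1))"
      unfolding a_def prod.distrib[symmetric]
    proof (rule prod.cong)
      fix j assume j: "j \<in> I - {i}"
      then have "e i - e j \<noteq> 0" using inj i by (auto dest: inj_onD)
      then show "(1 - 1 / (e i - e j)) * (e i - e j) = e i - e j - 1"
        by (simp add: field_simps)
    qed simp
    show ?thesis unfolding polyp A B C D by simp
  qed
  have "p = 0"
  proof (rule ccontr)
    assume "p \<noteq> 0"
    then have "card {x. poly p x = 0} \<le> degree p" by (rule card_poly_roots_bound)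
    moreover have "e ` I \<subseteq> {x. poly p x = 0}" using roots by auto
    then have "card (e ` I) \<le> card {x. poly p x = 0}"
      using \<open>p \<noteq> 0\<close> by (intro card_mono poly_roots_finite)
    moreover have "card (e ` I) = n" using inj n_def by (simp add: card_image)
    ultimately show False using dp n1 by linarith
  qed
  then have "poly p u = 0" by simp
  then show ?thesis unfolding polyp a_def by (simp add: algebra_simps)
qed




definition lin :: "complex \<Rightarrow> complex fps" where "lin c = 1 + fps_const c * fps_X"
definition geo :: "complex \<Rightarrow> complex fps" where "geo c = Abs_fps (\<lambda>q. c ^ q)"
definition sc :: "complex fps \<Rightarrow> complex fps" where "sc f = Abs_fps (\<lambda>q. (-1) ^ q * f $ q)"

lemma lin_nth: "lin c $ k = (if k = 0 then 1 else if k = 1 then c else 0)"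
  by (simp add: lin_def)

lemma lin_geo: "lin (-c) * geo c = 1"
proof (rule fps_ext)
  fix k show "(lin (-c) * geo c) $ k = 1 $ k"
  proof (cases k)
    case 0 then show ?thesis by (simp add: lin_def geo_def)
  next
    case (Suc m)
    have "(lin (-c) * geo c) $ k = geo c $ k - c * geo c $ m"
      by (simp add: lin_def algebra_simps Suc)
    then show ?thesis by (simp add: geo_def Suc)
  qed
qed

lemma sc_mult: "sc (f * g) = sc f * sc g"
proof (rule fps_ext)
  fix q
  have "sc (f * g) $ q = (\<Sum>i=0..q. (-1)^q * (f $ i * g $ (q - i)))"
    by (simp add: sc_def fps_mult_nth sum_distrib_left)
  also have "\<dots> = (\<Sum>i=0..q. ((-1)^i * f $ i) * ((-1)^(q-i) * g $ (q - i)))"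
  proof (rule sum.cong)
    fix i assume "i \<in> {0..q}"
    then have "(-1::complex)^q = (-1)^i * (-1)^(q-i)"
      by (simp flip: power_add)
    then show "(-1)^q * (f $ i * g $ (q - i)) = ((-1)^i * f $ i) * ((-1)^(q-i) * g $ (q - i))"
      by simp
  qed simp
  also have "\<dots> = (sc f * sc g) $ q" by (simp add: sc_def fps_mult_nth)
  finally show "sc (f * g) $ q = (sc f * sc g) $ q" .
qed

lemma sc_1: "sc 1 = 1" by (rule fps_ext) (simp add: sc_def)
lemma sc_add: "sc (f + g) = sc f + sc g" by (rule fps_ext) (simp add: sc_def algebra_simps)
lemma sc_diff: "sc (f - g) = sc f - sc g" by (rule fps_ext) (simp add: sc_def algebra_simps)
lemma sc_lin: "sc (lin c) = lin (-c)" by (rule fps_ext) (simp add: sc_def lin_nth)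
lemma sc_X: "sc fps_X = - fps_X" by (rule fps_ext) (simp add: sc_def fps_X_def)
lemma sc_prod: "sc (\<Prod>j\<in>S. f j) = (\<Prod>j\<in>S. sc (f j))"
  by (induction S rule: infinite_finite_induct) (auto simp: sc_1 sc_mult)

lemma prod_lin_nth0: "(\<Prod>j\<in>S. lin (c j)) $ 0 = 1"
  by (induction S rule: infinite_finite_induct) (auto simp: lin_nth)

lemma prod_lin_nth1: "finite S \<Longrightarrow> (\<Prod>j\<in>S. lin (c j)) $ 1 = (\<Sum>j\<in>S. c j)"
  by (induction S rule: finite_induct) (auto simp: lin_nth prod_lin_nth0 fps_mult_nth_1)

lemma pf_fps:
  fixes e :: "nat \<Rightarrow> complex" and I :: "nat set"
  assumes fin: "finite I" and inj: "inj_on e I"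
  shows "(\<Prod>j\<in>I. lin (-(e j + 1))) = (\<Prod>j\<in>I. lin (- e j)) -
     fps_X * (\<Sum>i\<in>I. fps_const (\<Prod>j\<in>I-{i}. (1 - 1/(e i - e j))) * (\<Prod>j\<in>I-{i}. lin (- e j)))"
proof -
  define a where "a i = (\<Prod>j\<in>I-{i}. (1 - 1/(e i - e j)))" for i
  define q where "q = (\<Prod>j\<in>I. [:1, -(e j + 1):]) - (\<Prod>j\<in>I. [:1, - e j:]) +
     [:0, 1:] * (\<Sum>i\<in>I. smult (a i) (\<Prod>j\<in>I-{i}. [:1, - e j:]))"
  have pw: "(\<Prod>j\<in>S. (1 - c j * w)) = w ^ card S * (\<Prod>j\<in>S. (1/w - c j))"
    if "w \<noteq> 0" for S and c :: "nat \<Rightarrow> complex" and w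
  proof -
    have "(\<Prod>j\<in>S. (1 - c j * w)) = (\<Prod>j\<in>S. w * (1/w - c j))"
      using that by (intro prod.cong) (auto simp: field_simps)
    also have "\<dots> = w ^ card S * (\<Prod>j\<in>S. (1/w - c j))"
      by (simp add: prod.distrib)
    finally show ?thesis .
  qed
  have polyq: "poly q w = 0" if w: "w \<noteq> 0" for w
  proof -
    have "poly q w = (\<Prod>j\<in>I. (1 - (e j + 1) * w)) - (\<Prod>j\<in>I. (1 - e j * w)) +
       w * (\<Sum>i\<in>I. a i * (\<Prod>j\<in>I-{i}. (1 - e j * w)))"
      unfolding q_def by (simp add: poly_prod poly_sum) (simp add: algebra_simps)
    also have "\<dots> = w ^ card I * ((\<Prod>j\<in>I. (1/w - e j - 1)) - (\<Prod>j\<in>I. (1/w - e j)) +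
       (\<Sum>i\<in>I. a i * (\<Prod>j\<in>I-{i}. (1/w - e j))))"
    proof -
      have s1: "w * (\<Sum>i\<in>I. a i * (\<Prod>j\<in>I-{i}. (1 - e j * w))) =
          w ^ card I * (\<Sum>i\<in>I. a i * (\<Prod>j\<in>I-{i}. (1/w - e j)))"
        unfolding sum_distrib_left
      proof (rule sum.cong)
        fix i assume i: "i \<in> I"
        have ci: "card I = Suc (card (I - {i}))" using i fin
          by (metis card_Suc_Diff1)
        show "w * (a i * (\<Prod>j\<in>I-{i}. (1 - e j * w))) = w ^ card I * (a i * (\<Prod>j\<in>I-{i}. (1/w - e j)))"
          unfolding pw[OF w] ci by simp
      qed simp
      show ?thesis by (simp only: s1 pw[OF w, where S=I]) (simp add: algebra_simps diff_diff_eq)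
    qed
    also have "\<dots> = 0" using pf_u[OF fin inj, of "1/w"] unfolding a_def by simp
    finally show ?thesis .
  qed
  have "q = 0"
  proof (rule ccontr)
    assume "q \<noteq> 0"
    then have "finite {w. poly q w = 0}" by (rule poly_roots_finite)
    moreover have "{w::complex. w \<noteq> 0} \<subseteq> {w. poly q w = 0}" using polyq by auto
    moreover have "infinite {w::complex. w \<noteq> 0}"
    proof -
      have "{w::complex. w \<noteq> 0} = UNIV - {0}" by auto
      then show ?thesis by (simp add: infinite_UNIV_char_0)
    qed
    ultimately show False by (metis finite_subset)
  qed
  then have "fps_of_poly q = 0" by simp
  then have "(\<Prod>j\<in>I. lin (-(e j + 1))) - (\<Prod>j\<in>I. lin (- e j)) +
     (\<Sum>i\<in>I. fps_const (a i) * (\<Prod>j\<in>I-{i}. lin (- e j))) * fps_X = 0"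
    unfolding q_def
    by (simp add: fps_of_poly_add fps_of_poly_diff fps_of_poly_mult fps_of_poly_prod
        fps_of_poly_sum fps_of_poly_smult fps_of_poly_linear' fps_of_poly_pCons lin_def)
  then show ?thesis unfolding a_def by (simp add: algebra_simps)
qed




lemma key:
  fixes e :: "nat \<Rightarrow> complex" and I :: "nat set" and \<sigma> :: "nat \<Rightarrow> nat"
  assumes fin: "finite I" and inj: "inj_on e I"
    and sI: "\<And>j. j \<in> I \<Longrightarrow> \<sigma> j \<in> I" and ss: "\<And>j. j \<in> I \<Longrightarrow> \<sigma> (\<sigma> j) = j"
    and es: "\<And>j. j \<in> I \<Longrightarrow> e (\<sigma> j) = -1 - e j"
  defines "a \<equiv> \<lambda>i. (\<Prod>j\<in>I-{i}. (1 - 1/(e i - e j)))"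
  defines "d \<equiv> \<lambda>q. (\<Sum>i\<in>I. a i * e i ^ q)"
  shows "d 0 = of_nat (card I) \<and>
    (\<forall>N. odd N \<longrightarrow> d N = -(1/2) * (\<Sum>k=0..N-1. d k * ((-1)^(N-1-k) * d (N-1-k))))"
proof -
  define D where "D = Abs_fps d"
  define M where "M = (\<Prod>j\<in>I. lin (- e j))"
  define P where "P = (\<Prod>j\<in>I. lin (e j))"
  have Dsum: "D = (\<Sum>i\<in>I. fps_const (a i) * geo (e i))"
    by (rule fps_ext) (simp add: D_def d_def geo_def fps_sum_nth)
  have MD: "M * D = (\<Sum>i\<in>I. fps_const (a i) * (\<Prod>j\<in>I-{i}. lin (- e j)))"
    unfolding Dsum sum_distrib_left
  proof (rule sum.cong)
    fix i assume i: "i \<in> I"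
    have "M = lin (- e i) * (\<Prod>j\<in>I-{i}. lin (- e j))"
      unfolding M_def using i fin by (simp add: prod.remove)
    then have "M * (fps_const (a i) * geo (e i)) =
        fps_const (a i) * (\<Prod>j\<in>I-{i}. lin (- e j)) * (lin (- e i) * geo (e i))"
      by (simp add: algebra_simps)
    then show "M * (fps_const (a i) * geo (e i)) = fps_const (a i) * (\<Prod>j\<in>I-{i}. lin (- e j))"
      by (simp add: lin_geo)
  qed simp
  have NP: "(\<Prod>j\<in>I. lin (-(e j + 1))) = P"
    unfolding P_def
  proof (rule prod.reindex_bij_witness[of I \<sigma> \<sigma>])
    fix j assume j: "j \<in> I"
    show "\<sigma> (\<sigma> j) = j" "\<sigma> j \<in> I" using j ss sI by auto
    have "e (\<sigma> j) = - (e j + 1)" using es[OF j] by simp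
    then show "lin (e (\<sigma> j)) = lin (- (e j + 1))" by (simp only:)
  qed (use ss sI in auto)
  have PF: "(\<Prod>j\<in>I. lin (-(e j + 1))) = M - fps_X * (\<Sum>i\<in>I. fps_const (a i) * (\<Prod>j\<in>I-{i}. lin (- e j)))"
    unfolding a_def M_def by (rule pf_fps[OF fin inj])
  have "P = M - fps_X * (M * D)" using PF by (simp only: NP MD)
  then have PM: "P = M * (1 - fps_X * D)" by (simp add: algebra_simps)
  have scM: "sc M = P" unfolding M_def P_def by (simp add: sc_prod sc_lin)
  have scP: "sc P = M" unfolding M_def P_def by (simp add: sc_prod sc_lin)
  have MP: "M = P * (1 + fps_X * sc D)"
  proof -
    have "sc P = sc M * sc (1 - fps_X * D)" using PM sc_mult by metis
    then show ?thesis unfolding scP scM by (simp add: sc_diff sc_1 sc_mult sc_X)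
  qed
  have PM0: "(P * M) $ 0 = 1" unfolding P_def M_def by (simp add: prod_lin_nth0)
  have "P * M = (P * M) * ((1 - fps_X * D) * (1 + fps_X * sc D))"
  proof -
    have "P * M = (M * (1 - fps_X * D)) * (P * (1 + fps_X * sc D))" using PM MP by simp
    also have "\<dots> = (P * M) * ((1 - fps_X * D) * (1 + fps_X * sc D))" by (simp only: ac_simps)
    finally show ?thesis .
  qed
  then have F: "(1 - fps_X * D) * (1 + fps_X * sc D) = 1"
  proof -
    have "P * M \<noteq> 0" using PM0 by (metis one_neq_zero fps_zero_nth)
    then show ?thesis using \<open>P * M = _\<close> by (metis mult_cancel_left1)
  qed
  have part1: "d N = -(1/2) * (\<Sum>k=0..N-1. d k * ((-1)^(N-1-k) * d (N-1-k)))" if N: "odd N" for N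
  proof -
    obtain m where m: "N = Suc m" using N by (cases N) auto
    have F2: "(1 - fps_X * D) * (1 + fps_X * sc D) = 1 + fps_X * (sc D - D) - fps_X * (fps_X * (D * sc D))"
      by (simp add: algebra_simps)
    have "((1 - fps_X * D) * (1 + fps_X * sc D)) $ Suc (Suc m) = 0" unfolding F by simp
    then have "(sc D - D) $ Suc m - (D * sc D) $ m = 0" unfolding F2 by (simp add: fps_X_mult_nth)
    moreover have "(sc D - D) $ Suc m = - 2 * d N"
      using N m by (simp add: sc_def D_def)
    moreover have "(D * sc D) $ m = (\<Sum>k=0..m. d k * ((-1)^(m-k) * d (m-k)))"
      by (simp add: fps_mult_nth sc_def D_def)
    ultimately show ?thesis using m by simp
  qed
  define S where "S = (\<Sum>j\<in>I. e j)"
  have h1: "P $ 1 = S" unfolding P_def S_def using prod_lin_nth1[OF fin, of e] by simp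
  have h2: "M $ 1 = - S" unfolding M_def S_def using prod_lin_nth1[OF fin, of "\<lambda>j. - e j"] by (simp add: sum_negf)
  have h3: "(M * (1 - fps_X * D)) $ 1 = M $ 1 - d 0"
    by (simp add: fps_mult_nth_1 D_def M_def prod_lin_nth0 fps_X_mult_nth)
  have h4: "S = (\<Sum>j\<in>I. e (\<sigma> j))" unfolding S_def
    by (rule sum.reindex_bij_witness[of I \<sigma> \<sigma>]) (use ss sI in auto)
  have h5: "(\<Sum>j\<in>I. e (\<sigma> j)) = (\<Sum>j\<in>I. (-1 - e j))"
    using es by (intro sum.cong) auto
  have h6: "(\<Sum>j\<in>I. (-1 - e j)) = - of_nat (card I) - S"
    unfolding S_def by (simp add: sum_subtractf)
  have h7: "S = - S - d 0" using h1 h2 h3 PM by simp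
  have "d 0 = of_nat (card I)" using h4 h5 h6 h7 by (simp add: field_simps)
  with part1 show ?thesis by blast
qed



definition ee :: "nat \<Rightarrow> nat \<Rightarrow> (nat \<Rightarrow> complex) \<Rightarrow> nat \<Rightarrow> complex" where
  "ee r n x i = restr_weight r n x i + of_nat n / 2 - of_nat i"
definition aa :: "nat \<Rightarrow> nat \<Rightarrow> (nat \<Rightarrow> complex) \<Rightarrow> nat \<Rightarrow> complex" where
  "aa r n x i = (\<Prod>j\<in>{1..n}-{i}. (1 - 1/(ee r n x i - ee r n x j)))"
definition dd :: "nat \<Rightarrow> nat \<Rightarrow> nat \<Rightarrow> (nat \<Rightarrow> complex) \<Rightarrow> complex" where
  "dd r n q x = (\<Sum>i\<in>{1..n}. aa r n x i * ee r n x i ^ q)"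

lemma cas_ee: "restr_casimir r n p x = (\<Sum>i\<in>{1..n}. aa r n x i * (ee r n x i + of_nat n / 2) ^ p)"
  unfolding restr_casimir_def casimir_ev_def
proof (rule sum.cong)
  fix i assume i: "i \<in> {1..n}"
  have A: "restr_weight r n x i + of_nat n - of_nat i = ee r n x i + of_nat n / 2"
    by (simp add: ee_def field_simps)
  have B: "(\<Prod>j\<in>{1..n}-{i}. (1 - 1 / (restr_weight r n x i - restr_weight r n x j + of_nat j - of_nat i))) = aa r n x i"
    unfolding aa_def by (intro prod.cong) (simp_all add: ee_def algebra_simps)
  show "(restr_weight r n x i + of_nat n - of_nat i) ^ p *
     (\<Prod>j\<in>{1..n}-{i}. (1 - 1 / (restr_weight r n x i - restr_weight r n x j + of_nat j - of_nat i))) =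
     aa r n x i * (ee r n x i + of_nat n / 2) ^ p"
    unfolding A B by simp
qed simp

lemma c_from_d: "restr_casimir r n p x =
   (\<Sum>q\<le>p. of_nat (p choose q) * (of_nat n / 2) ^ (p - q) * dd r n q x)"
proof -
  have "restr_casimir r n p x = (\<Sum>i\<in>{1..n}. aa r n x i *
      (\<Sum>q\<le>p. of_nat (p choose q) * ee r n x i ^ q * (of_nat n / 2) ^ (p - q)))"
    unfolding cas_ee binomial_ring ..
  also have "\<dots> = (\<Sum>i\<in>{1..n}. \<Sum>q\<le>p. of_nat (p choose q) * (of_nat n / 2) ^ (p - q) * (aa r n x i * ee r n x i ^ q))"
    by (simp add: sum_distrib_left algebra_simps)
  also have "\<dots> = (\<Sum>q\<le>p. \<Sum>i\<in>{1..n}. of_nat (p choose q) * (of_nat n / 2) ^ (p - q) * (aa r n x i * ee r n x i ^ q))"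
    by (rule sum.swap)
  also have "\<dots> = (\<Sum>q\<le>p. of_nat (p choose q) * (of_nat n / 2) ^ (p - q) * dd r n q x)"
    by (simp add: dd_def sum_distrib_left)
  finally show ?thesis .
qed

lemma d_from_c: "dd r n q x =
   (\<Sum>p\<le>q. of_nat (q choose p) * (- of_nat n / 2) ^ (q - p) * restr_casimir r n p x)"
proof -
  have "dd r n q x = (\<Sum>i\<in>{1..n}. aa r n x i * ((ee r n x i + of_nat n / 2) + (- of_nat n / 2)) ^ q)"
    by (simp add: dd_def)
  also have "\<dots> = (\<Sum>i\<in>{1..n}. aa r n x i *
      (\<Sum>p\<le>q. of_nat (q choose p) * (ee r n x i + of_nat n / 2) ^ p * (- of_nat n / 2) ^ (q - p)))"
    unfolding binomial_ring ..
  also have "\<dots> = (\<Sum>i\<in>{1..n}. \<Sum>p\<le>q. of_nat (q choose p) * (- of_nat n / 2) ^ (q - p) * (aa r n x i * (ee r n x i + of_nat n / 2) ^ p))"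
    by (simp add: sum_distrib_left algebra_simps)
  also have "\<dots> = (\<Sum>p\<le>q. \<Sum>i\<in>{1..n}. of_nat (q choose p) * (- of_nat n / 2) ^ (q - p) * (aa r n x i * (ee r n x i + of_nat n / 2) ^ p))"
    by (rule sum.swap)
  also have "\<dots> = (\<Sum>p\<le>q. of_nat (q choose p) * (- of_nat n / 2) ^ (q - p) * restr_casimir r n p x)"
    by (simp add: cas_ee sum_distrib_left)
  finally show ?thesis .
qed

lemma rw_sym:
  assumes "n \<ge> 2 * r" "j \<in> {1..n}"
  shows "restr_weight r n x (n + 1 - j) = - restr_weight r n x j"
  using assms unfolding restr_weight_def by auto

lemma generic_facts:
  assumes nr: "n \<ge> 2 * r" and g: "casimir_generic r n x"
  shows "dd r n 0 x = of_nat n \<and>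
    (\<forall>N. odd N \<longrightarrow> dd r n N x = -(1/2) * (\<Sum>k=0..N-1. dd r n k x * ((-1)^(N-1-k) * dd r n (N-1-k) x)))"
proof -
  have inj: "inj_on (ee r n x) {1..n}"
  proof (rule inj_onI)
    fix i j assume i: "i \<in> {1..n}" and j: "j \<in> {1..n}" and eq: "ee r n x i = ee r n x j"
    show "i = j"
    proof (rule ccontr)
      assume "i \<noteq> j"
      then have "restr_weight r n x i - restr_weight r n x j + of_nat j - of_nat i \<noteq> 0"
        using g i j unfolding casimir_generic_def by blast
      moreover have "restr_weight r n x i - restr_weight r n x j + of_nat j - of_nat i = ee r n x i - ee r n x j"
        by (simp add: ee_def algebra_simps)
      ultimately show False using eq by simp
    qed
  qed
  have es: "ee r n x (n + 1 - j) = -1 - ee r n x j" if j: "j \<in> {1..n}" for j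
  proof -
    have hN: "of_nat (n + 1 - j) = (of_nat n + 1 - of_nat j :: complex)" using j by (simp add: of_nat_diff)
    show ?thesis unfolding ee_def rw_sym[OF nr j] hN by (simp add: field_simps)
  qed
  have K: "dd r n 0 x = of_nat (card {1..n}) \<and>
    (\<forall>N. odd N \<longrightarrow> dd r n N x = -(1/2) * (\<Sum>k=0..N-1. dd r n k x * ((-1)^(N-1-k) * dd r n (N-1-k) x)))"
    unfolding dd_def aa_def
    by (rule key[of "{1..n}" "ee r n x" "\<lambda>j. n + 1 - j"]) (use inj es in auto)
  then show ?thesis by simp
qed

definition Rep :: "nat \<Rightarrow> nat \<Rightarrow> ((nat \<Rightarrow> complex) \<Rightarrow> complex) \<Rightarrow> bool" where
  "Rep r n g \<longleftrightarrow> (\<exists>f\<in>even_casimir_subalg r n. \<forall>x. casimir_generic r n x \<longrightarrow> g x = f x)"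

lemma Rep_const: "Rep r n (\<lambda>_. c)"
  unfolding Rep_def by (rule bexI[of _ "\<lambda>_. c"]) (auto intro: even_casimir_subalg.const)

lemma Rep_add: "Rep r n f \<Longrightarrow> Rep r n g \<Longrightarrow> Rep r n (\<lambda>x. f x + g x)"
  unfolding Rep_def by (metis (no_types, lifting) even_casimir_subalg.add)

lemma Rep_mult: "Rep r n f \<Longrightarrow> Rep r n g \<Longrightarrow> Rep r n (\<lambda>x. f x * g x)"
  unfolding Rep_def by (metis (no_types, lifting) even_casimir_subalg.mult)

lemma Rep_cong: "(\<And>x. casimir_generic r n x \<Longrightarrow> g x = h x) \<Longrightarrow> Rep r n h \<Longrightarrow> Rep r n g"
  unfolding Rep_def by metis

lemma Rep_sum: "finite S \<Longrightarrow> (\<And>s. s \<in> S \<Longrightarrow> Rep r n (g s)) \<Longrightarrow> Rep r n (\<lambda>x. \<Sum>s\<in>S. g s x)"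
proof (induction S rule: finite_induct)
  case empty then show ?case using Rep_const[of r n 0] by simp
next
  case (insert a S)
  have "Rep r n (\<lambda>x. g a x + (\<Sum>s\<in>S. g s x))"
    using insert by (intro Rep_add) auto
  then show ?case using insert by simp
qed

lemma Rep_scale: "Rep r n f \<Longrightarrow> Rep r n (\<lambda>x. c * f x)"
  using Rep_mult[OF Rep_const] .

lemma all_rep:
  assumes nr: "n \<ge> 2 * r"
  shows "Rep r n (restr_casimir r n p)"
proof (induction p rule: less_induct)
  case (less p)
  show ?case
  proof (cases "even p")
    case True
    show ?thesis
    proof (cases "p = 0")
      case True
      show ?thesis
      proof (rule Rep_cong[OF _ Rep_const])
        fix x assume g: "casimir_generic r n x"
        show "restr_casimir r n p x = of_nat n"
          using generic_facts[OF nr g] c_from_d[of r n p x] True by simp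
      qed
    next
      case False
      then obtain k where k: "p = 2 * k" "k \<ge> 1" using \<open>even p\<close> by (auto elim!: evenE)
      then show ?thesis unfolding Rep_def by (blast intro: even_casimir_subalg.gen)
    qed
  next
    case False
    have RD: "Rep r n (dd r n q)" if q: "q < p" for q
    proof (rule Rep_cong[of r n _ "\<lambda>x. \<Sum>p'\<le>q. of_nat (q choose p') * (- of_nat n / 2) ^ (q - p') * restr_casimir r n p' x"])
      show "dd r n q x = (\<Sum>p'\<le>q. of_nat (q choose p') * (- of_nat n / 2) ^ (q - p') * restr_casimir r n p' x)" for x
        by (rule d_from_c)
      show "Rep r n (\<lambda>x. \<Sum>p'\<le>q. of_nat (q choose p') * (- of_nat n / 2) ^ (q - p') * restr_casimir r n p' x)"
        by (intro Rep_sum Rep_scale) (use q less in auto)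
    qed
    have RDp: "Rep r n (dd r n p)"
    proof (rule Rep_cong[of r n _ "\<lambda>x. -(1/2) * (\<Sum>k=0..p-1. dd r n k x * ((-1)^(p-1-k) * dd r n (p-1-k) x))"])
      show "dd r n p x = -(1/2) * (\<Sum>k=0..p-1. dd r n k x * ((-1)^(p-1-k) * dd r n (p-1-k) x))"
        if g: "casimir_generic r n x" for x
        using generic_facts[OF nr g] False by blast
      have p0: "p > 0" using False by (cases p) auto
      show "Rep r n (\<lambda>x. -(1/2) * (\<Sum>k=0..p-1. dd r n k x * ((-1)^(p-1-k) * dd r n (p-1-k) x)))"
        by (intro Rep_scale Rep_sum Rep_mult RD) (use p0 in auto)
    qed
    have RDall: "Rep r n (dd r n q)" if "q \<le> p" for q
      using RD RDp that by (cases "q = p") auto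
    show ?thesis
    proof (rule Rep_cong[of r n _ "\<lambda>x. \<Sum>q\<le>p. of_nat (p choose q) * (of_nat n / 2) ^ (p - q) * dd r n q x"])
      show "restr_casimir r n p x = (\<Sum>q\<le>p. of_nat (p choose q) * (of_nat n / 2) ^ (p - q) * dd r n q x)" for x
        by (rule c_from_d)
      show "Rep r n (\<lambda>x. \<Sum>q\<le>p. of_nat (p choose q) * (of_nat n / 2) ^ (p - q) * dd r n q x)"
        by (intro Rep_sum Rep_scale RDall) auto
    qed
  qed
qed

theorem lemma3:
  fixes r n i :: nat
  assumes "r \<ge> 1" and "n \<ge> 2 * r"
  shows "\<exists>f \<in> even_casimir_subalg r n.
           \<forall>x. casimir_generic r n x \<longrightarrow> restr_casimir r n (2 * i + 1) x = f x"
  using all_rep[OF assms(2), of "2 * i + 1"] unfolding Rep_def .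


end
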